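(* Let $k$ be odd and, for $1\le m\le n$, let $C_m$ be the set of positions with exactly $m$ coordinates in $\{0,k-1\}$ and all other coordinates equal to $(k-1)/2$. Then every combination $g$ satisfies $g(C_m)=C_m$ for all $m$, and $$\prod_{m=1}^{n}\operatorname{sgn}\big(g|_{C_m}\big)=1.$$ Equivalently, the quantity $C=\prod_{m=1}^n\operatorname{sgn}(\sigma_m)$, where $\sigma_m$ is the permutation of the cubies of $C_m$ relating a state to a fixed reference state, is preserved by every combination.
   Context: Fix integers $k\ge2$, $n\ge3$, $M=\{0,\dots,k-1\}$. Positions are $p\in M^n$. For distinct $i,j$, $\psi_{i,j}:M^n\to M^n$ is $(\psi_{i,j}p)_i=k-1-p_j$, $(\psi_{i,j}p)_j=p_i$, other coordinates unchanged. A move is given by distinct $i,j$ and constants $c_l\in M$ ($l\notin\{i,j\}$): it sends each position $p$ with $p_l=c_l$ ($l\notin\{i,j\}$) to $\psi_{i,j}(p)$ and fixes the other positions; a combination is a finite sequence of moves, regarded as the composite permutation of $M^n$. *)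

theory Defs
  imports "HOL-Combinatorics.Permutations"
begin

text \<open>Positions p in M^n with M = {0..k-1}, coded as functions nat => nat that are
  < k on {0..<n} and 0 outside.\<close>
definition positions :: "nat \<Rightarrow> nat \<Rightarrow> (nat \<Rightarrow> nat) set" where
  "positions k n = {p. (\<forall>i<n. p i < k) \<and> (\<forall>i. n \<le> i \<longrightarrow> p i = 0)}"

definition psi :: "nat \<Rightarrow> nat \<Rightarrow> nat \<Rightarrow> (nat \<Rightarrow> nat) \<Rightarrow> (nat \<Rightarrow> nat)" where
  "psi k i j p = p(i := k - 1 - p j, j := p i)"

definition move :: "nat \<Rightarrow> nat \<Rightarrow> nat \<Rightarrow> nat \<Rightarrow> (nat \<Rightarrow> nat) \<Rightarrow> (nat \<Rightarrow> nat) \<Rightarrow> (nat \<Rightarrow> nat)" where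
  "move k n i j c p =
     (if \<forall>l<n. l \<noteq> i \<and> l \<noteq> j \<longrightarrow> p l = c l then psi k i j p else p)"

definition valid_move :: "nat \<Rightarrow> nat \<Rightarrow> nat \<times> nat \<times> (nat \<Rightarrow> nat) \<Rightarrow> bool" where
  "valid_move k n m = (case m of (i, j, c) \<Rightarrow>
     i < n \<and> j < n \<and> i \<noteq> j \<and> (\<forall>l<n. l \<noteq> i \<and> l \<noteq> j \<longrightarrow> c l < k))"

definition apply_moves :: "nat \<Rightarrow> nat \<Rightarrow> (nat \<times> nat \<times> (nat \<Rightarrow> nat)) list \<Rightarrow> (nat \<Rightarrow> nat) \<Rightarrow> (nat \<Rightarrow> nat)" where
  "apply_moves k n ms = foldr (\<lambda>(i, j, c) f. f \<circ> move k n i j c) ms id"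

definition combination :: "nat \<Rightarrow> nat \<Rightarrow> ((nat \<Rightarrow> nat) \<Rightarrow> (nat \<Rightarrow> nat)) \<Rightarrow> bool" where
  "combination k n g \<longleftrightarrow> (\<exists>ms. (\<forall>m\<in>set ms. valid_move k n m) \<and> g = apply_moves k n ms)"

definition Cset :: "nat \<Rightarrow> nat \<Rightarrow> nat \<Rightarrow> (nat \<Rightarrow> nat) set" where
  "Cset k n m = {p \<in> positions k n.
      card {i. i < n \<and> (p i = 0 \<or> p i = k - 1)} = m \<and>
      (\<forall>i<n. p i \<noteq> 0 \<and> p i \<noteq> k - 1 \<longrightarrow> p i = (k - 1) div 2)}"

end

theory Submission
  imports Defs
begin

lemma sign_on_4cycle:
  assumes "a \<in> A" "b \<in> A" "c \<in> A" "d \<in> A"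
    and "distinct [a,b,c,d]"
    and "f a = b" "f b = c" "f c = d" "f d = a"
    and "\<And>x. x \<in> A \<Longrightarrow> x \<notin> {a,b,c,d} \<Longrightarrow> f x = x"
  shows "sign_on A f = -1"
proof -
  have eq: "restrict_id f A = Transposition.transpose a b \<circ> Transposition.transpose b c \<circ> Transposition.transpose c d"
  proof
    fix x
    show "restrict_id f A x = (Transposition.transpose a b \<circ> Transposition.transpose b c \<circ> Transposition.transpose c d) x"
    proof (cases "x \<in> {a,b,c,d}")
      case True
      then show ?thesis using assms(1-9) by (auto simp: restrict_id_def)
    next
      case False
      then show ?thesis using assms(10) by (auto simp: restrict_id_def)
    qed
  qed
  show ?thesis unfolding sign_on_def eq using assms(5)
    by (simp add: sign_compose permutation_swap_id permutation_compose sign_swap_id)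
qed
lemma sign_on_fix:
  assumes "\<And>x. x \<in> A \<Longrightarrow> f x = x"
  shows "sign_on A f = 1"
proof -
  have "sign_on A f = sign_on A id" by (rule sign_on_cong) (use assms in auto)
  then show ?thesis by simp
qed

lemma finite_positions: "finite (positions k n)"
proof -
  have "positions k n \<subseteq> {f. \<forall>x. (x \<in> {..<n} \<longrightarrow> f x \<in> {..<k}) \<and> (x \<notin> {..<n} \<longrightarrow> f x = 0)}"
    by (auto simp: positions_def)
  then show ?thesis by (rule finite_subset) (rule finite_set_of_finite_funs, auto)
qed

lemma finite_Cset: "finite (Cset k n m)"
  by (rule finite_subset[OF _ finite_positions[of k n]]) (auto simp: Cset_def)



context
  fixes k n i j :: nat and c :: "nat \<Rightarrow> nat"
  assumes k2: "k \<ge> 2" and ko: "odd k" and ij: "i < n" "j < n" "i \<noteq> j"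
    and cv: "\<forall>l<n. l \<noteq> i \<and> l \<noteq> j \<longrightarrow> c l < k"
begin

lemma psi_apply: "psi k i j p l = (if l = j then p i else if l = i then k - 1 - p j else p l)"
  using ij by (auto simp: psi_def)

lemma ext_psi:
  assumes "p \<in> positions k n"
  shows "{l. l < n \<and> (psi k i j p l = 0 \<or> psi k i j p l = k - 1)}
       = Transposition.transpose i j ` {l. l < n \<and> (p l = 0 \<or> p l = k - 1)}"
proof -
  have pi: "p i < k" "p j < k" using assms ij by (auto simp: positions_def)
  show ?thesis
  proof (rule set_eqI)
    fix x
    have "x \<in> Transposition.transpose i j ` {l. l < n \<and> (p l = 0 \<or> p l = k - 1)} \<longleftrightarrow>
          Transposition.transpose i j x \<in> {l. l < n \<and> (p l = 0 \<or> p l = k - 1)}"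
      by (rule in_transpose_image_iff)
    also have "\<dots> \<longleftrightarrow> x \<in> {l. l < n \<and> (psi k i j p l = 0 \<or> psi k i j p l = k - 1)}"
      using pi ij by (auto simp: psi_apply Transposition.transpose_def)
    finally show "x \<in> {l. l < n \<and> (psi k i j p l = 0 \<or> psi k i j p l = k - 1)} \<longleftrightarrow> x \<in> Transposition.transpose i j ` {l. l < n \<and> (p l = 0 \<or> p l = k - 1)}" by simp
  qed
qed

lemma psi_Cset:
  assumes "p \<in> Cset k n m"
  shows "psi k i j p \<in> Cset k n m"
proof -
  have pp: "p \<in> positions k n" using assms by (simp add: Cset_def)
  have pi: "p i < k" "p j < k" using pp ij by (auto simp: positions_def)
  have pos: "psi k i j p \<in> positions k n"
    using pp ij k2 by (auto simp: positions_def psi_apply)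
  have card: "card {l. l < n \<and> (psi k i j p l = 0 \<or> psi k i j p l = k - 1)} = m"
    unfolding ext_psi[OF pp] using assms
    by (simp add: Cset_def card_image)
  have hk: "k - 1 - (k - 1) div 2 = (k - 1) div 2" using ko k2
    by (auto elim!: oddE)
  have cen: "\<forall>l<n. psi k i j p l \<noteq> 0 \<and> psi k i j p l \<noteq> k - 1 \<longrightarrow> psi k i j p l = (k - 1) div 2"
  proof (intro allI impI)
    fix l assume l: "l < n" and ne: "psi k i j p l \<noteq> 0 \<and> psi k i j p l \<noteq> k - 1"
    have C: "\<forall>l<n. p l \<noteq> 0 \<and> p l \<noteq> k - 1 \<longrightarrow> p l = (k - 1) div 2"
      using assms by (simp add: Cset_def)
    show "psi k i j p l = (k - 1) div 2"
    proof (cases "l = j")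
      case True
      then have "p i \<noteq> 0 \<and> p i \<noteq> k - 1" using ne by (simp add: psi_apply)
      then have "p i = (k-1) div 2" using C ij by blast
      then show ?thesis using True by (simp add: psi_apply)
    next
      case False
      show ?thesis
      proof (cases "l = i")
        case True
        then have "p j \<noteq> 0 \<and> p j \<noteq> k - 1" using ne False pi by (auto simp: psi_apply)
        then have "p j = (k-1) div 2" using C ij by auto
        then show ?thesis using True False hk by (simp add: psi_apply)
      qed (use ne C l False in \<open>auto simp: psi_apply\<close>)
    qed
  qed
  show ?thesis unfolding Cset_def by (intro CollectI conjI pos card cen)
qed

lemma move_Cset:
  assumes "p \<in> Cset k n m"
  shows "move k n i j c p \<in> Cset k n m"
  using psi_Cset[OF assms] assms by (simp add: move_def)

lemma move_inj: "inj_on (move k n i j c) (positions k n)"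
proof (rule inj_onI)
  fix p q assume p: "p \<in> positions k n" and q: "q \<in> positions k n"
    and e: "move k n i j c p = move k n i j c q"
  have pq: "p i < k" "p j < k" "q i < k" "q j < k" using p q ij by (auto simp: positions_def)
  have sl: "(\<forall>l<n. l \<noteq> i \<and> l \<noteq> j \<longrightarrow> psi k i j p l = c l) = (\<forall>l<n. l \<noteq> i \<and> l \<noteq> j \<longrightarrow> p l = c l)" for p
    by (auto simp: psi_apply)
  show "p = q"
  proof (cases "\<forall>l<n. l \<noteq> i \<and> l \<noteq> j \<longrightarrow> p l = c l")
    case True
    show ?thesis
    proof (cases "\<forall>l<n. l \<noteq> i \<and> l \<noteq> j \<longrightarrow> q l = c l")
      case True2: True
      then have "psi k i j p = psi k i j q" using e True by (simp add: move_def)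
      then have "\<forall>l. psi k i j p l = psi k i j q l" by simp
      then have a: "\<forall>l. psi k i j p l = psi k i j q l" by simp
      have "p j = q j" using a[rule_format, of i] pq ij by (simp add: psi_apply)
      moreover have "p i = q i" using a[rule_format, of j] ij by (simp add: psi_apply)
      moreover have "p l = q l" if "l \<noteq> i" "l \<noteq> j" for l
        using a[rule_format, of l] that by (simp add: psi_apply)
      ultimately show ?thesis by (metis ext)
    next
      case False
      then have "psi k i j p = q" using e True False by (simp add: move_def)
      then show ?thesis using sl[of p] True False by auto
    qed
  next
    case False
    show ?thesis
    proof (cases "\<forall>l<n. l \<noteq> i \<and> l \<noteq> j \<longrightarrow> q l = c l")
      case True
      then have "p = psi k i j q" using e True False by (simp add: move_def)
      then show ?thesis using sl[of q] True False by auto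
    next
      case False2: False
      then show ?thesis using e False False2 by (simp add: move_def)
    qed
  qed
qed

lemma move_bij: "bij_betw (move k n i j c) (Cset k n m) (Cset k n m)"
proof -
  have inj: "inj_on (move k n i j c) (Cset k n m)"
    by (rule inj_on_subset[OF move_inj]) (auto simp: Cset_def)
  have "move k n i j c ` Cset k n m = Cset k n m"
  proof (rule endo_inj_surj[OF finite_Cset _ inj])
    show "move k n i j c ` Cset k n m \<subseteq> Cset k n m"
      by (rule image_subsetI) (rule move_Cset)
  qed
  then show ?thesis using inj by (simp add: bij_betw_def)
qed

end


definition qq :: "nat \<Rightarrow> nat \<Rightarrow> nat \<Rightarrow> (nat \<Rightarrow> nat) \<Rightarrow> nat \<Rightarrow> nat \<Rightarrow> nat \<Rightarrow> nat" where
  "qq n i j c a b = (\<lambda>l. if l = i then a else if l = j then b else if l < n then c l else 0)"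

context
  fixes k n i j :: nat and c :: "nat \<Rightarrow> nat"
  assumes k2: "k \<ge> 2" and ko: "odd k" and ij: "i < n" "j < n" "i \<noteq> j"
    and cv: "\<forall>l<n. l \<noteq> i \<and> l \<noteq> j \<longrightarrow> c l < k"
begin

abbreviation "EE \<equiv> {l. l < n \<and> l \<noteq> i \<and> l \<noteq> j \<and> (c l = 0 \<or> c l = k - 1)}"
abbreviation "ind a \<equiv> (if a = 0 \<or> a = k - 1 then 1 else 0::nat)"
abbreviation "hh \<equiv> (k - 1) div 2"

lemma k3: "k \<ge> 3" using k2 ko by (cases "k = 2") auto

lemma hk: "k - 1 - hh = hh" using ko by (auto elim!: oddE)
lemma hk2: "k - Suc ((k - Suc 0) div 2) = (k - Suc 0) div 2" using hk by simp
lemma h_pos: "hh \<noteq> 0" using k3 by auto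
lemma h_lt: "hh \<noteq> k - 1" "hh < k" using k3 by auto

lemma ext_q: "{l. l < n \<and> (qq n i j c a b l = 0 \<or> qq n i j c a b l = k - 1)}
   = EE \<union> {l. l = i \<and> (a = 0 \<or> a = k - 1)} \<union> {l. l = j \<and> (b = 0 \<or> b = k - 1)}"
  using ij by (auto simp: qq_def)

lemma card_ext_q: "card {l. l < n \<and> (qq n i j c a b l = 0 \<or> qq n i j c a b l = k - 1)} = card EE + ind a + ind b"
proof -
  have f: "finite EE" by simp
  have c1: "card {l. l = i \<and> (a = 0 \<or> a = k - 1)} = ind a" by auto
  have c2: "card {l. l = j \<and> (b = 0 \<or> b = k - 1)} = ind b" by auto
  have "card (EE \<union> {l. l = i \<and> (a = 0 \<or> a = k - 1)} \<union> {l. l = j \<and> (b = 0 \<or> b = k - 1)})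
     = card (EE \<union> {l. l = i \<and> (a = 0 \<or> a = k - 1)}) + card {l. l = j \<and> (b = 0 \<or> b = k - 1)}"
    by (rule card_Un_disjoint) (use ij in auto)
  also have "card (EE \<union> {l. l = i \<and> (a = 0 \<or> a = k - 1)}) = card EE + card {l. l = i \<and> (a = 0 \<or> a = k - 1)}"
    by (rule card_Un_disjoint) (use ij in auto)
  finally show ?thesis unfolding ext_q c1 c2 by simp
qed

lemma q_in_C:
  assumes cc: "\<forall>l<n. l \<noteq> i \<and> l \<noteq> j \<longrightarrow> c l \<in> {0, hh, k - 1}"
    and a: "a \<in> {0, hh, k - 1}" and b: "b \<in> {0, hh, k - 1}"
  shows "qq n i j c a b \<in> Cset k n (card EE + ind a + ind b)"
proof -
  have pos: "qq n i j c a b \<in> positions k n"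
    using a b cv ij k3 by (auto simp: positions_def qq_def)
  have cen: "\<forall>l<n. qq n i j c a b l \<noteq> 0 \<and> qq n i j c a b l \<noteq> k - 1 \<longrightarrow> qq n i j c a b l = hh"
    using a b cc by (auto simp: qq_def)
  show ?thesis unfolding Cset_def
    by (intro CollectI conjI pos cen card_ext_q)
qed

lemma C_slice:
  assumes x: "x \<in> Cset k n m" and sl: "\<forall>l<n. l \<noteq> i \<and> l \<noteq> j \<longrightarrow> x l = c l"
  shows "x = qq n i j c (x i) (x j)" "x i \<in> {0, hh, k - 1}" "x j \<in> {0, hh, k - 1}"
    "m = card EE + ind (x i) + ind (x j)"
proof -
  have xp: "x \<in> positions k n" and xc: "card {l. l < n \<and> (x l = 0 \<or> x l = k - 1)} = m"
    and xe: "\<forall>l<n. x l \<noteq> 0 \<and> x l \<noteq> k - 1 \<longrightarrow> x l = hh"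
    using x by (auto simp: Cset_def)
  show e: "x = qq n i j c (x i) (x j)"
  proof
    fix l show "x l = qq n i j c (x i) (x j) l"
      using sl xp by (auto simp: positions_def qq_def)
  qed
  show "x i \<in> {0, hh, k - 1}" "x j \<in> {0, hh, k - 1}" using xe ij by auto
  obtain a b where ab: "a = x i" "b = x j" by blast
  have "qq n i j c a b = qq n i j c (x i) (x j)" using ab by simp
  with e have e2: "x = qq n i j c a b" by simp
  have "card {l. l < n \<and> (qq n i j c a b l = 0 \<or> qq n i j c a b l = k - 1)} = m"
    using xc unfolding e2[symmetric] .
  then show "m = card EE + ind (x i) + ind (x j)"
    unfolding card_ext_q ab by simp
qed

lemma move_q:
  "move k n i j c (qq n i j c a b) = qq n i j c (k - 1 - b) a"
  using ij by (auto simp: move_def psi_def fun_eq_iff qq_def)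

lemma q_inj: "qq n i j c a b = qq n i j c a' b' \<longleftrightarrow> a = a' \<and> b = b'"
proof
  assume eq: "qq n i j c a b = qq n i j c a' b'"
  have "a = a'" using fun_cong[OF eq, of i] by (simp add: qq_def)
  moreover have "b = b'" using fun_cong[OF eq, of j] ij by (simp add: qq_def)
  ultimately show "a = a' \<and> b = b'" by simp
qed simp


lemma ind_vals: "ind 0 = 1" "ind (k - 1) = 1" "ind hh = 0"
  using h_pos h_lt by auto

lemma sign_move_cases:
  assumes cc: "\<forall>l<n. l \<noteq> i \<and> l \<noteq> j \<longrightarrow> c l \<in> {0, hh, k - 1}"
  shows "sign_on (Cset k n m) (move k n i j c) = (if m = card EE + 1 \<or> m = card EE + 2 then -1 else 1)"
proof -
  let ?e = "card EE"
  let ?K = "k - 1"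
  let ?q = "qq n i j c"
  have hne: "hh \<noteq> 0" "hh \<noteq> ?K" "(0::nat) \<noteq> ?K" using h_pos h_lt k3 by auto
  have mv: "move k n i j c (?q a b) = ?q (?K - b) a" for a b by (rule move_q)
  have qi: "?q a b = ?q a' b' \<longleftrightarrow> a = a' \<and> b = b'" for a b a' b' by (rule q_inj)
  have inC: "?q a b \<in> Cset k n (?e + ind a + ind b)" if "a \<in> {0, hh, ?K}" "b \<in> {0, hh, ?K}" for a b
    using q_in_C[OF cc that] .
  have sl: "\<exists>a b. x = ?q a b \<and> a \<in> {0, hh, ?K} \<and> b \<in> {0, hh, ?K} \<and> m = ?e + ind a + ind b"
    if "x \<in> Cset k n m" "\<forall>l<n. l \<noteq> i \<and> l \<noteq> j \<longrightarrow> x l = c l" for x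
    using C_slice[OF that] by blast
  have nsl: "move k n i j c x = x" if "\<not> (\<forall>l<n. l \<noteq> i \<and> l \<noteq> j \<longrightarrow> x l = c l)" for x
    unfolding move_def by (rule if_not_P[OF that])
  show ?thesis
  proof (cases "m = ?e + 1")
    case True
    have r: "sign_on (Cset k n m) (move k n i j c) = -1"
    proof (rule sign_on_4cycle[of "?q hh 0" _ "?q ?K hh" "?q hh ?K" "?q 0 hh"])
      show "?q hh 0 \<in> Cset k n m" "?q ?K hh \<in> Cset k n m" "?q hh ?K \<in> Cset k n m" "?q 0 hh \<in> Cset k n m"
        using inC[of hh 0, unfolded ind_vals] inC[of ?K hh, unfolded ind_vals] inC[of hh ?K, unfolded ind_vals]
          inC[of 0 hh, unfolded ind_vals] True by simp_all
      show "distinct [?q hh 0, ?q ?K hh, ?q hh ?K, ?q 0 hh]"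
        using hne by (simp add: qi)
      show "move k n i j c (?q hh 0) = ?q ?K hh" "move k n i j c (?q ?K hh) = ?q hh ?K"
        "move k n i j c (?q hh ?K) = ?q 0 hh" "move k n i j c (?q 0 hh) = ?q hh 0"
        by (simp_all add: mv hk hk2)
      fix x assume x: "x \<in> Cset k n m" "x \<notin> {?q hh 0, ?q ?K hh, ?q hh ?K, ?q 0 hh}"
      show "move k n i j c x = x"
      proof (cases "\<forall>l<n. l \<noteq> i \<and> l \<noteq> j \<longrightarrow> x l = c l")
        case True2: True
        obtain a b where ab: "x = ?q a b" "a \<in> {0, hh, ?K}" "b \<in> {0, hh, ?K}" "m = ?e + ind a + ind b"
          using sl[OF x(1) True2] by blast
        have False using ab x(2) True hne by auto
        then show ?thesis ..
      qed (rule nsl)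
    qed
    then show ?thesis using True by simp
  next
    case F1: False
    show ?thesis
    proof (cases "m = ?e + 2")
      case True
      have r: "sign_on (Cset k n m) (move k n i j c) = -1"
      proof (rule sign_on_4cycle[of "?q 0 0" _ "?q ?K 0" "?q ?K ?K" "?q 0 ?K"])
        show "?q 0 0 \<in> Cset k n m" "?q ?K 0 \<in> Cset k n m" "?q ?K ?K \<in> Cset k n m" "?q 0 ?K \<in> Cset k n m"
          using inC[of 0 0, unfolded ind_vals] inC[of ?K 0, unfolded ind_vals] inC[of ?K ?K, unfolded ind_vals]
            inC[of 0 ?K, unfolded ind_vals] True by simp_all
        show "distinct [?q 0 0, ?q ?K 0, ?q ?K ?K, ?q 0 ?K]"
          using hne by (simp add: qi)
        show "move k n i j c (?q 0 0) = ?q ?K 0" "move k n i j c (?q ?K 0) = ?q ?K ?K"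
          "move k n i j c (?q ?K ?K) = ?q 0 ?K" "move k n i j c (?q 0 ?K) = ?q 0 0"
          by (simp_all add: mv)
        fix x assume x: "x \<in> Cset k n m" "x \<notin> {?q 0 0, ?q ?K 0, ?q ?K ?K, ?q 0 ?K}"
        show "move k n i j c x = x"
        proof (cases "\<forall>l<n. l \<noteq> i \<and> l \<noteq> j \<longrightarrow> x l = c l")
          case True2: True
          obtain a b where ab: "x = ?q a b" "a \<in> {0, hh, ?K}" "b \<in> {0, hh, ?K}" "m = ?e + ind a + ind b"
            using sl[OF x(1) True2] by blast
          have False using ab x(2) True hne by auto
          then show ?thesis ..
        qed (rule nsl)
      qed
      then show ?thesis using True by simp
    next
      case F2: False
      have r: "sign_on (Cset k n m) (move k n i j c) = 1"
      proof (rule sign_on_fix)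
        fix x assume x: "x \<in> Cset k n m"
        show "move k n i j c x = x"
        proof (cases "\<forall>l<n. l \<noteq> i \<and> l \<noteq> j \<longrightarrow> x l = c l")
          case True2: True
          obtain a b where ab: "x = ?q a b" "a \<in> {0, hh, ?K}" "b \<in> {0, hh, ?K}" "m = ?e + ind a + ind b"
            using sl[OF x(1) True2] by blast
          have "ind a = 0 \<and> ind b = 0" using ab(4) F1 F2 by (auto split: if_splits)
          then have "a \<noteq> 0 \<and> a \<noteq> ?K" "b \<noteq> 0 \<and> b \<noteq> ?K" by (auto split: if_splits)
          then have "a = hh" "b = hh" using ab(2,3) by blast+
          then show ?thesis using ab(1) by (simp add: mv hk hk2)
        qed (rule nsl)
      qed
      then show ?thesis using F1 F2 by simp
    qed
  qed
qed

lemma prod_move: "(\<Prod>m=1..n. sign_on (Cset k n m) (move k n i j c)) = 1"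
proof (cases "\<forall>l<n. l \<noteq> i \<and> l \<noteq> j \<longrightarrow> c l \<in> {0, hh, k - 1}")
  case False
  then obtain l0 where l0: "l0 < n" "l0 \<noteq> i" "l0 \<noteq> j" "c l0 \<notin> {0, hh, k - 1}" by blast
  have "sign_on (Cset k n m) (move k n i j c) = 1" for m
  proof (rule sign_on_fix)
    fix x assume x: "x \<in> Cset k n m"
    have "\<forall>l<n. x l \<noteq> 0 \<and> x l \<noteq> k - 1 \<longrightarrow> x l = hh" using x unfolding Cset_def by blast
    then have "x l0 \<in> {0, hh, k - 1}" using l0(1) by blast
    then have "\<not> (\<forall>l<n. l \<noteq> i \<and> l \<noteq> j \<longrightarrow> x l = c l)" using l0 by auto
    then show "move k n i j c x = x" unfolding move_def by (rule if_not_P)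
  qed
  then show ?thesis by simp
next
  case True
  let ?e = "card EE"
  have sub: "EE \<subseteq> {..<n} - {i, j}" by auto
  have "card EE \<le> card ({..<n} - {i, j})" by (rule card_mono[OF _ sub]) simp
  also have "\<dots> = n - 2" using ij by (simp add: card_Diff_subset)
  finally have eb: "?e + 2 \<le> n" using ij by linarith
  have "(\<Prod>m=1..n. sign_on (Cset k n m) (move k n i j c))
      = (\<Prod>m\<in>{1..n}. (if m = ?e + 1 \<or> m = ?e + 2 then -1 else 1::int))"
    by (rule prod.cong[OF refl]) (rule sign_move_cases[OF True])
  also have "\<dots> = (\<Prod>m\<in>{?e+1, ?e+2}. (if m = ?e + 1 \<or> m = ?e + 2 then -1 else 1::int))"
    by (rule prod.mono_neutral_right) (use eb in auto)
  also have "\<dots> = 1" by simp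
  finally show ?thesis .
qed
end

lemma apply_moves_inv:
  assumes "k \<ge> 2" "odd k" "\<forall>m\<in>set ms. valid_move k n m"
  shows "(\<forall>m\<in>{1..n}. bij_betw (apply_moves k n ms) (Cset k n m) (Cset k n m)) \<and>
         (\<Prod>m=1..n. sign_on (Cset k n m) (apply_moves k n ms)) = 1"
  using assms(3)
proof (induction ms)
  case Nil
  have "apply_moves k n [] = id" by (simp add: apply_moves_def)
  then show ?case by (simp add: bij_betw_def)
next
  case (Cons x ms)
  obtain i j c where x: "x = (i, j, c)" by (cases x) auto
  have v: "i < n" "j < n" "i \<noteq> j" "\<forall>l<n. l \<noteq> i \<and> l \<noteq> j \<longrightarrow> c l < k"
    using Cons.prems x by (auto simp: valid_move_def)
  have IH: "\<forall>m\<in>{1..n}. bij_betw (apply_moves k n ms) (Cset k n m) (Cset k n m)"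
    "(\<Prod>m=1..n. sign_on (Cset k n m) (apply_moves k n ms)) = 1"
    using Cons by auto
  have eq: "apply_moves k n (x # ms) = apply_moves k n ms \<circ> move k n i j c"
    by (simp add: apply_moves_def x)
  have mb: "bij_betw (move k n i j c) (Cset k n m) (Cset k n m)" for m
    by (rule move_bij[OF assms(1,2) v])
  have b: "\<forall>m\<in>{1..n}. bij_betw (apply_moves k n (x # ms)) (Cset k n m) (Cset k n m)"
    unfolding eq using IH(1) mb by (blast intro: bij_betw_trans)
  have "(\<Prod>m=1..n. sign_on (Cset k n m) (apply_moves k n (x # ms)))
      = (\<Prod>m=1..n. sign_on (Cset k n m) (apply_moves k n ms) * sign_on (Cset k n m) (move k n i j c))"
    unfolding eq by (rule prod.cong[OF refl], rule sign_on_compose) (use IH(1) mb finite_Cset in auto)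
  also have "\<dots> = 1"
    using IH(2) prod_move[OF assms(1,2) v] by (simp add: prod.distrib)
  finally show ?case using b by simp
qed

theorem mainTheorem10:
  fixes k n :: nat and g :: "(nat \<Rightarrow> nat) \<Rightarrow> (nat \<Rightarrow> nat)"
  assumes "k \<ge> 2" and "n \<ge> 3" and "odd k" and "combination k n g"
  shows "(\<forall>m\<in>{1..n}. g ` Cset k n m = Cset k n m) \<and>
         (\<Prod>m=1..n. sign_on (Cset k n m) g) = 1"
proof -
  obtain ms where ms: "\<forall>m\<in>set ms. valid_move k n m" "g = apply_moves k n ms"
    using assms(4) by (auto simp: combination_def)
  from apply_moves_inv[OF assms(1,3) ms(1)] ms(2) show ?thesis
    by (auto simp: bij_betw_def)
qed

end
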